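(* Let $P:\mathcal{X}\times\mathcal{E}\to\mathcal{Y}\times\mathcal{E}$ be an $\varepsilon$-DP RAM program for computing the mean $\frac{1}{|x|}\sum_i x_i$ of datasets $x\in\{0,1\}^*$, such that the runtime distributions satisfy $T_P(x,\mathit{env})\equiv T_P(x',\mathit{env}')$ (identically distributed) for all $x,x'\in\{0,1\}^*$ and all input-compatible $\mathit{env},\mathit{env}'\in\mathcal{E}$. Then for every $0<\beta<1$ there exist a dataset $x$ and a constant $\alpha$ such that $$\Pr\left[\Big|\mathrm{out}(P(x,\mathit{env}))-\frac{1}{|x|}\sum_i x_i\Big|>\alpha\right]>\beta .$$
   Context: Datasets are finite bit strings $x\in\{0,1\}^*$ (records are bits). A program runs on $x$ in an execution environment $\mathit{env}\in\mathcal{E}$ (initial machine state) compatible with $x$; $\mathrm{out}(P(x,\mathit{env}))$ denotes the random output and $T_P(x,\mathit{env})$ the random runtime (number of RAM instructions executed). $\varepsilon$-DP means the output distribution satisfies $\varepsilon$-differential privacy with respect to datasets at insert-delete distance at most $1$. RAM model: memory cells with arbitrary naturals, unit-cost arithmetic, Boolean ops, memory access, conditional jumps, $\texttt{RAND}(n)$ uniform on $\{0,\dots,n\}$. *)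

theory Defs
  imports "HOL-Probability.Probability"
begin

text \<open>Arguments are memory addresses (except constants and jump targets).\<close>

datatype instr =
    Const nat nat
  | Add nat nat nat
  | Sub nat nat nat
  | Mul nat nat nat
  | Div nat nat nat
  | Mod nat nat nat
  | BAnd nat nat nat
  | BOr nat nat nat
  | BXor nat nat nat
  | Eq nat nat nat
  | Lt nat nat nat
  | Load nat nat
  | Store nat nat
  | Jz nat nat
  | Jmp nat
  | Rand nat nat
  | Halt

type_synonym prog = "instr list"

type_synonym conf = "nat \<times> (nat \<Rightarrow> nat)"

definition halted :: "prog \<Rightarrow> conf \<Rightarrow> bool" where
  "halted P c \<longleftrightarrow> fst c \<ge> length P \<or> P ! fst c = Halt"

fun exec :: "instr \<Rightarrow> conf \<Rightarrow> conf pmf" where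
  "exec (Const i n) (pc, M) = return_pmf (Suc pc, M(i := n))"
| "exec (Add i j k) (pc, M) = return_pmf (Suc pc, M(i := M j + M k))"
| "exec (Sub i j k) (pc, M) = return_pmf (Suc pc, M(i := M j - M k))"
| "exec (Mul i j k) (pc, M) = return_pmf (Suc pc, M(i := M j * M k))"
| "exec (Div i j k) (pc, M) = return_pmf (Suc pc, M(i := M j div M k))"
| "exec (Mod i j k) (pc, M) = return_pmf (Suc pc, M(i := M j mod M k))"
| "exec (BAnd i j k) (pc, M) = return_pmf (Suc pc, M(i := Bit_Operations.and (M j) (M k)))"
| "exec (BOr i j k) (pc, M) = return_pmf (Suc pc, M(i := Bit_Operations.or (M j) (M k)))"
| "exec (BXor i j k) (pc, M) = return_pmf (Suc pc, M(i := Bit_Operations.xor (M j) (M k)))"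
| "exec (Eq i j k) (pc, M) = return_pmf (Suc pc, M(i := of_bool (M j = M k)))"
| "exec (Lt i j k) (pc, M) = return_pmf (Suc pc, M(i := of_bool (M j < M k)))"
| "exec (Load i j) (pc, M) = return_pmf (Suc pc, M(i := M (M j)))"
| "exec (Store i j) (pc, M) = return_pmf (Suc pc, M(M i := M j))"
| "exec (Jz i l) (pc, M) = return_pmf (if M i = 0 then l else Suc pc, M)"
| "exec (Jmp l) (pc, M) = return_pmf (l, M)"
| "exec (Rand i j) (pc, M) = map_pmf (\<lambda>r. (Suc pc, M(i := r))) (pmf_of_set {0..M j})"
| "exec Halt (pc, M) = return_pmf (pc, M)"

text \<open>One step of execution, together with a counter of executed instructions.
  Halted configurations are absorbing and do not increase the counter.\<close>
definition step :: "prog \<Rightarrow> conf \<times> nat \<Rightarrow> (conf \<times> nat) pmf" where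
  "step P s = (if halted P (fst s) then return_pmf s
               else map_pmf (\<lambda>c. (c, Suc (snd s))) (exec (P ! fst (fst s)) (fst s)))"

primrec run :: "prog \<Rightarrow> nat \<Rightarrow> conf \<times> nat \<Rightarrow> (conf \<times> nat) pmf" where
  "run P 0 s = return_pmf s"
| "run P (Suc k) s = bind_pmf (run P k s) (step P)"

text \<open>An execution environment is the initial memory; execution starts at pc 0
  with instruction counter 0.\<close>
definition init :: "(nat \<Rightarrow> nat) \<Rightarrow> conf \<times> nat" where
  "init env = ((0, env), 0)"

definition time_prob :: "prog \<Rightarrow> (nat \<Rightarrow> nat) \<Rightarrow> nat \<Rightarrow> real" where
  "time_prob P env t = measure_pmf.prob (run P t (init env)) {s. halted P (fst s) \<and> snd s = t}"

definition terminates :: "prog \<Rightarrow> (nat \<Rightarrow> nat) \<Rightarrow> bool" where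
  "terminates P env \<longleftrightarrow> (\<Sum>t. time_prob P env t) = 1"

text \<open>Output convention: the ram_output is the rational number M[0] / M[1] read off the final memory.\<close>
definition ram_output :: "(nat \<Rightarrow> nat) \<Rightarrow> real" where
  "ram_output M = real (M 0) / real (M 1)"

definition out_prob :: "prog \<Rightarrow> (nat \<Rightarrow> nat) \<Rightarrow> real set \<Rightarrow> real" where
  "out_prob P env A = (\<Sum>t. measure_pmf.prob (run P t (init env))
       {s. halted P (fst s) \<and> snd s = t \<and> ram_output (snd (fst s)) \<in> A})"

type_synonym dataset = "bool list"

text \<open>Input convention: M[2] holds |x|, and M[3+i] holds the bit x_i; all other cells
  are arbitrary (part of the environment).\<close>
definition compatible :: "dataset \<Rightarrow> (nat \<Rightarrow> nat) \<Rightarrow> bool" where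
  "compatible x env \<longleftrightarrow> env 2 = length x \<and> (\<forall>i < length x. env (3 + i) = of_bool (x ! i))"

definition mean :: "dataset \<Rightarrow> real" where
  "mean x = (\<Sum>i<length x. of_bool (x ! i)) / real (length x)"

text \<open>Insert-delete distance at most 1.\<close>
definition neighbors :: "dataset \<Rightarrow> dataset \<Rightarrow> bool" where
  "neighbors x y \<longleftrightarrow> x = y
     \<or> (\<exists>i < length x. y = take i x @ drop (Suc i) x)
     \<or> (\<exists>i < length y. x = take i y @ drop (Suc i) y)"

definition eps_DP :: "real \<Rightarrow> prog \<Rightarrow> bool" where
  "eps_DP \<epsilon> P \<longleftrightarrow> (\<forall>x x' env env' A. neighbors x x' \<longrightarrow> compatible x env \<longrightarrow> compatible x' env' \<longrightarrow>
       out_prob P env A \<le> exp \<epsilon> * out_prob P env' A)"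

end

theory Submission
  imports Defs
begin

lemma run_inv:
  "s \<in> set_pmf (run P m (c, 0)) \<Longrightarrow> snd s \<le> m \<and> (\<not> halted P (fst s) \<longrightarrow> snd s = m)"
proof (induction m arbitrary: s)
  case 0 then show ?case by simp
next
  case (Suc m)
  then obtain s0 where s0: "s0 \<in> set_pmf (run P m (c,0))" "s \<in> set_pmf (step P s0)" by auto
  show ?case
  proof (cases "halted P (fst s0)")
    case True then show ?thesis using s0 Suc.IH[OF s0(1)] by (auto simp: step_def)
  next
    case False then show ?thesis using s0 Suc.IH[OF s0(1)] by (auto simp: step_def)
  qed
qed

lemma run_stable_e:
  assumes "t \<le> m" "\<forall>s\<in>F. halted P (fst s) \<and> snd s = t"
  shows "emeasure (measure_pmf (run P m (c,0))) F = emeasure (measure_pmf (run P t (c,0))) F"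
  using assms(1)
proof (induction m rule: dec_induct)
  case base then show ?case by simp
next
  case (step m)
  have "emeasure (measure_pmf (run P (Suc m) (c,0))) F
      = (\<integral>\<^sup>+s. emeasure (measure_pmf (step P s)) F \<partial>measure_pmf (run P m (c,0)))" by simp
  also have "\<dots> = (\<integral>\<^sup>+s. indicator F s \<partial>measure_pmf (run P m (c,0)))"
  proof (rule nn_integral_cong_AE, unfold AE_measure_pmf_iff, intro ballI)
    fix s assume s: "s \<in> set_pmf (run P m (c,0))"
    show "emeasure (measure_pmf (step P s)) F = indicator F s"
    proof (cases "halted P (fst s)")
      case True then show ?thesis by (simp add: step_def)
    next
      case False
      then have "snd s = m" using run_inv[OF s] by simp
      then have "F \<inter> set_pmf (step P s) = {}" using False step.hyps assms(2)
        by (auto simp: step_def)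
      then have "emeasure (measure_pmf (step P s)) F = 0"
        by (metis emeasure_Int_set_pmf emeasure_empty inf_commute)
      moreover have "s \<notin> F" using False assms(2) by auto
      ultimately show ?thesis by simp
    qed
  qed
  also have "\<dots> = emeasure (measure_pmf (run P m (c,0))) F" by simp
  finally show ?case using step.IH by simp
qed

lemma run_stable:
  assumes "t \<le> m" "\<forall>s\<in>F. halted P (fst s) \<and> snd s = t"
  shows "measure (measure_pmf (run P m (c,0))) F = measure (measure_pmf (run P t (c,0))) F"
  using run_stable_e[OF assms] by (simp add: measure_pmf.emeasure_eq_measure)

definition At :: "prog \<Rightarrow> (nat \<Rightarrow> nat) \<Rightarrow> (conf \<times> nat \<Rightarrow> bool) \<Rightarrow> nat \<Rightarrow> real" where
  "At P e Q t = measure (measure_pmf (run P t (init e))) {s. halted P (fst s) \<and> snd s = t \<and> Q s}"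

definition HT :: "prog \<Rightarrow> (nat \<Rightarrow> nat) \<Rightarrow> nat \<Rightarrow> (conf \<times> nat \<Rightarrow> bool) \<Rightarrow> real" where
  "HT P e T Q = measure (measure_pmf (run P T (init e))) {s. halted P (fst s) \<and> Q s}"

lemma sum_At: "(\<Sum>t\<le>T. At P e Q t) = HT P e T Q"
proof -
  have "(\<Sum>t\<le>T. At P e Q t) = (\<Sum>t\<le>T. measure (measure_pmf (run P T (init e))) {s. halted P (fst s) \<and> snd s = t \<and> Q s})"
    unfolding At_def init_def by (intro sum.cong refl run_stable[symmetric]) auto
  also have "\<dots> = measure (measure_pmf (run P T (init e))) (\<Union>t\<in>{..T}. {s. halted P (fst s) \<and> snd s = t \<and> Q s})"
    by (rule measure_pmf.finite_measure_finite_Union[symmetric]) (auto simp: disjoint_family_on_def)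
  also have "\<dots> = HT P e T Q"
    unfolding HT_def
  proof (rule measure_pmf.finite_measure_eq_AE)
    show "AE x in measure_pmf (run P T (init e)). (x \<in> (\<Union>t\<in>{..T}. {s. halted P (fst s) \<and> snd s = t \<and> Q s})) = (x \<in> {s. halted P (fst s) \<and> Q s})"
      unfolding AE_measure_pmf_iff init_def using run_inv by fastforce
  qed auto
  finally show ?thesis .
qed

lemma At_nonneg: "0 \<le> At P e Q t" by (simp add: At_def)

lemma HT_le1: "HT P e T Q \<le> 1" by (simp add: HT_def)

lemma At_summable: "summable (At P e Q)"
proof (rule summableI_nonneg_bounded[where x=1])
  fix n
  have "sum (At P e Q) {..<n} \<le> sum (At P e Q) {..n}"
    by (intro sum_mono2) (auto simp: At_nonneg)
  also have "\<dots> \<le> 1" using sum_At HT_le1 by metis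
  finally show "sum (At P e Q) {..<n} \<le> 1" .
qed (rule At_nonneg)

lemma At_add: "At P e Q t + At P e (\<lambda>s. \<not> Q s) t = At P e (\<lambda>s. True) t"
  unfolding At_def
  by (subst measure_pmf.finite_measure_Union[symmetric]) (auto intro!: arg_cong[where f="measure _"])

lemma HT_add: "HT P e T Q + HT P e T (\<lambda>s. \<not> Q s) = HT P e T (\<lambda>s. True)"
  unfolding HT_def
  by (subst measure_pmf.finite_measure_Union[symmetric]) (auto intro!: arg_cong[where f="measure _"])

lemma time_prob_At: "time_prob P e t = At P e (\<lambda>s. True) t"
  by (simp add: time_prob_def At_def)

lemma out_prob_At: "out_prob P e A = suminf (At P e (\<lambda>s. ram_output (snd (fst s)) \<in> A))"
  by (simp add: out_prob_def At_def[abs_def])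

lemma out_prob_compl:
  assumes "terminates P e"
  shows "out_prob P e A + out_prob P e (-A) = 1"
proof -
  have "out_prob P e A + out_prob P e (-A) = suminf (\<lambda>t. At P e (\<lambda>s. ram_output (snd (fst s)) \<in> A) t + At P e (\<lambda>s. \<not> ram_output (snd (fst s)) \<in> A) t)"
    unfolding out_prob_At by (subst suminf_add) (auto intro: At_summable)
  also have "\<dots> = suminf (At P e (\<lambda>s. True))" by (simp add: At_add)
  also have "\<dots> = 1" using assms by (simp add: terminates_def time_prob_At[abs_def])
  finally show ?thesis .
qed

lemma out_prob_upper:
  assumes "terminates P e"
  shows "out_prob P e A \<le> 1 - HT P e T (\<lambda>s. True) + HT P e T (\<lambda>s. ram_output (snd (fst s)) \<in> A)"
proof -
  have "HT P e T (\<lambda>s. \<not> ram_output (snd (fst s)) \<in> A) = (\<Sum>t\<le>T. At P e (\<lambda>s. \<not> ram_output (snd (fst s)) \<in> A) t)"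
    by (simp add: sum_At)
  also have "\<dots> \<le> suminf (At P e (\<lambda>s. \<not> ram_output (snd (fst s)) \<in> A))"
    unfolding lessThan_Suc_atMost[symmetric]
    by (rule sum_le_suminf) (auto intro: At_summable At_nonneg)
  also have "\<dots> = out_prob P e (-A)" by (simp add: out_prob_At)
  finally show ?thesis using out_prob_compl[OF assms, of A] HT_add[of P e T "\<lambda>s. ram_output (snd (fst s)) \<in> A"]
    by linarith
qed

lemma HT_time: "HT P e T (\<lambda>s. True) = (\<Sum>t\<le>T. time_prob P e t)"
  by (simp add: sum_At time_prob_At)

lemma HT_le_out:
  assumes "terminates P e"
  shows "HT P e T (\<lambda>s. ram_output (snd (fst s)) \<in> A) \<le> out_prob P e A"
  unfolding out_prob_At sum_At[symmetric] lessThan_Suc_atMost[symmetric]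
  by (rule sum_le_suminf) (auto intro: At_summable At_nonneg)


fun rd :: "instr \<Rightarrow> (nat \<Rightarrow> nat) \<Rightarrow> nat set" where
  "rd (Load i j) M = {M j}"
| "rd _ M = {}"

fun iargs :: "instr \<Rightarrow> nat set" where
  "iargs (Const i n) = {i}"
| "iargs (Add i j k) = {i,j,k}"
| "iargs (Sub i j k) = {i,j,k}"
| "iargs (Mul i j k) = {i,j,k}"
| "iargs (Div i j k) = {i,j,k}"
| "iargs (Mod i j k) = {i,j,k}"
| "iargs (BAnd i j k) = {i,j,k}"
| "iargs (BOr i j k) = {i,j,k}"
| "iargs (BXor i j k) = {i,j,k}"
| "iargs (Eq i j k) = {i,j,k}"
| "iargs (Lt i j k) = {i,j,k}"
| "iargs (Load i j) = {i,j}"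
| "iargs (Store i j) = {i,j}"
| "iargs (Jz i l) = {i}"
| "iargs (Jmp l) = {}"
| "iargs (Rand i j) = {i,j}"
| "iargs Halt = {}"

definition Dirs :: "prog \<Rightarrow> nat set" where
  "Dirs P = (\<Union>\<iota>\<in>set P. iargs \<iota>)"

lemma finite_iargs: "finite (iargs \<iota>)" by (cases \<iota>) auto
lemma finite_Dirs: "finite (Dirs P)" by (simp add: Dirs_def finite_iargs)

type_synonym astate = "(conf \<times> nat) \<times> nat set"

definition astep :: "prog \<Rightarrow> astate \<Rightarrow> astate pmf" where
  "astep P a = map_pmf (\<lambda>s'. (s', if halted P (fst (fst a)) then snd a
       else snd a \<union> rd (P ! fst (fst (fst a))) (snd (fst (fst a))))) (step P (fst a))"

primrec arun :: "prog \<Rightarrow> nat \<Rightarrow> astate \<Rightarrow> astate pmf" where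
  "arun P 0 a = return_pmf a"
| "arun P (Suc k) a = bind_pmf (arun P k a) (astep P)"

lemma arun_proj: "map_pmf fst (arun P m a) = run P m (fst a)"
proof (induction m)
  case 0 then show ?case by simp
next
  case (Suc m)
  have "map_pmf fst (arun P (Suc m) a) = bind_pmf (arun P m a) (\<lambda>x. map_pmf fst (astep P x))"
    by (simp add: map_bind_pmf)
  also have "\<dots> = bind_pmf (arun P m a) (\<lambda>x. step P (fst x))"
    by (simp add: astep_def pmf.map_comp o_def)
  also have "\<dots> = bind_pmf (map_pmf fst (arun P m a)) (step P)"
    by (simp add: bind_map_pmf)
  finally show ?case using Suc by simp
qed

lemma card_rd: "finite (rd \<iota> M) \<and> card (rd \<iota> M) \<le> 1" by (cases \<iota>) auto

lemma arun_inv: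
  "a \<in> set_pmf (arun P m (s0, {})) \<Longrightarrow> snd s0 = 0 \<Longrightarrow>
     finite (snd a) \<and> card (snd a) \<le> snd (fst a) \<and> snd (fst a) \<le> m"
proof (induction m arbitrary: a)
  case 0 then show ?case by simp
next
  case (Suc m)
  then obtain a0 where a0: "a0 \<in> set_pmf (arun P m (s0,{}))" "a \<in> set_pmf (astep P a0)" by auto
  have IH: "finite (snd a0) \<and> card (snd a0) \<le> snd (fst a0) \<and> snd (fst a0) \<le> m"
    using Suc.IH[OF a0(1) Suc.prems(2)] .
  show ?case
  proof (cases "halted P (fst (fst a0))")
    case True then show ?thesis using a0 IH by (auto simp: astep_def step_def)
  next
    case False
    define r where "r = rd (P ! fst (fst (fst a0))) (snd (fst (fst a0)))"
    have r: "finite r" "card r \<le> 1" using card_rd unfolding r_def by auto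
    have "card (snd a0 \<union> r) \<le> card (snd a0) + card r" by (rule card_Un_le)
    then show ?thesis using False a0 IH r by (auto simp: astep_def step_def r_def[symmetric])
  qed
qed

definition Rel :: "nat set \<Rightarrow> astate \<Rightarrow> astate \<Rightarrow> bool" where
  "Rel U a a' \<longleftrightarrow> (snd a \<inter> U \<noteq> {} \<and> snd a' \<inter> U \<noteq> {}) \<or>
     (snd a \<inter> U = {} \<and> snd a = snd a' \<and> snd (fst a) = snd (fst a') \<and>
      fst (fst (fst a)) = fst (fst (fst a')) \<and>
      (\<forall>c. c \<notin> U \<longrightarrow> snd (fst (fst a)) c = snd (fst (fst a')) c))"

lemma rel_pmf_all: "(\<And>x y. x \<in> set_pmf p \<Longrightarrow> y \<in> set_pmf q \<Longrightarrow> R x y) \<Longrightarrow> rel_pmf R p q"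
  by (rule rel_pmf.intros[where pq="pair_pmf p q"]) (auto simp: map_fst_pair_pmf map_snd_pair_pmf)

lemma astep_mono: "a' \<in> set_pmf (astep P a) \<Longrightarrow> snd a \<subseteq> snd a'"
  by (auto simp: astep_def split: if_splits)

lemma exec_rel:
  assumes "iargs \<iota> \<inter> U = {}" "\<forall>c. c \<notin> U \<longrightarrow> M c = M' c" "R \<inter> U = {}"
  shows "rel_pmf (Rel U)
     (map_pmf (\<lambda>c. ((c, k), R \<union> rd \<iota> M)) (exec \<iota> (pc, M)))
     (map_pmf (\<lambda>c. ((c, k), R \<union> rd \<iota> M')) (exec \<iota> (pc, M')))"
proof (cases \<iota>)
  case (Rand i j)
  have "M j = M' j" using assms Rand by auto
  then show ?thesis using assms Rand
    by (auto simp: pmf.rel_map Rel_def intro!: rel_pmf_reflI)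
next
  case (Load i j)
  have "M j = M' j" using assms Load by auto
  then show ?thesis using assms Load
    by (auto simp: Rel_def)
next
  case (Store i j)
  have "M j = M' j" "M i = M' i" using assms Store by auto
  then show ?thesis using assms Store
    by (auto simp: Rel_def)
qed (use assms in \<open>auto simp: Rel_def\<close>)

lemma astep_rel:
  assumes "Rel U a a'" "U \<inter> Dirs P = {}"
  shows "rel_pmf (Rel U) (astep P a) (astep P a')"
proof (cases "snd a \<inter> U = {}")
  case False
  then have f: "snd a' \<inter> U \<noteq> {}" using assms(1) by (auto simp: Rel_def)
  show ?thesis
  proof (rule rel_pmf_all)
    fix x y assume "x \<in> set_pmf (astep P a)" "y \<in> set_pmf (astep P a')"
    then have "snd a \<subseteq> snd x" "snd a' \<subseteq> snd y" by (auto dest: astep_mono)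
    then show "Rel U x y" using False f by (auto simp: Rel_def)
  qed
next
  case True
  obtain pc M k R where a: "a = (((pc, M), k), R)" by (metis prod.collapse)
  obtain pc' M' k' R' where a': "a' = (((pc', M'), k'), R')" by (metis prod.collapse)
  have eq: "pc' = pc" "k' = k" "R' = R" "R \<inter> U = {}" "\<forall>c. c \<notin> U \<longrightarrow> M c = M' c"
    using assms(1) True unfolding a a' Rel_def by auto
  show ?thesis
  proof (cases "halted P (pc, M)")
    case True
    then have "halted P (pc, M')" by (simp add: halted_def)
    then show ?thesis using True eq unfolding a a' by (simp add: astep_def step_def Rel_def)
  next
    case False
    then have h': "\<not> halted P (pc, M')" by (simp add: halted_def)
    have "pc < length P" using False by (simp add: halted_def)
    then have "P ! pc \<in> set P" by simp
    then have "iargs (P ! pc) \<inter> U = {}" using assms(2) by (auto simp: Dirs_def)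
    from exec_rel[OF this eq(5) eq(4), of "Suc k" pc]
    show ?thesis using False h' eq unfolding a a'
      by (simp add: astep_def step_def pmf.map_comp o_def)
  qed
qed

lemma arun_rel:
  assumes "Rel U a a'" "U \<inter> Dirs P = {}"
  shows "rel_pmf (Rel U) (arun P m a) (arun P m a')"
proof (induction m)
  case 0 then show ?case using assms by simp
next
  case (Suc m) then show ?case
    by (simp, intro rel_pmf_bindI[OF Suc] astep_rel assms(2))
qed


lemma HT_arun: "HT P e T Q = measure (measure_pmf (arun P T (init e, {}))) {a. halted P (fst (fst a)) \<and> Q (fst a)}"
proof -
  have "HT P e T Q = measure (measure_pmf (map_pmf fst (arun P T (init e, {})))) {s. halted P (fst s) \<and> Q s}"
    by (simp add: HT_def arun_proj)
  also have "\<dots> = measure (measure_pmf (arun P T (init e, {}))) {a. halted P (fst (fst a)) \<and> Q (fst a)}"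
    by (simp add: vimage_def)
  finally show ?thesis .
qed

lemma HT_couple:
  assumes agree: "\<forall>c. c \<notin> U \<longrightarrow> e c = e' c" and dirs: "U \<inter> Dirs P = {}" and u01: "0 \<notin> U" "1 \<notin> U"
  shows "HT P e' T (\<lambda>s. ram_output (snd (fst s)) \<in> A) \<le> HT P e T (\<lambda>s. ram_output (snd (fst s)) \<in> A)
          + measure (measure_pmf (arun P T (init e, {}))) {a. snd a \<inter> U \<noteq> {}}"
proof -
  define F where "F = {a::astate. halted P (fst (fst a)) \<and> ram_output (snd (fst (fst a))) \<in> A}"
  define G where "G = {a::astate. snd a \<inter> U \<noteq> {}}"
  have r: "rel_pmf (Rel U) (arun P T (init e', {})) (arun P T (init e, {}))"
    by (rule arun_rel[OF _ dirs]) (use agree in \<open>auto simp: Rel_def init_def\<close>)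
  have "HT P e' T (\<lambda>s. ram_output (snd (fst s)) \<in> A) = measure (measure_pmf (arun P T (init e', {}))) F"
    by (simp add: HT_arun F_def)
  also have "\<dots> \<le> measure (measure_pmf (arun P T (init e, {}))) {y. \<exists>x\<in>F. Rel U x y}"
    by (rule rel_pmf_measureD[OF r])
  also have "\<dots> \<le> measure (measure_pmf (arun P T (init e, {}))) (F \<union> G)"
  proof (rule measure_pmf.finite_measure_mono)
    show "{y. \<exists>x\<in>F. Rel U x y} \<subseteq> F \<union> G"
    proof
      fix y assume "y \<in> {y. \<exists>x\<in>F. Rel U x y}"
      then obtain x where x: "x \<in> F" "Rel U x y" by auto
      show "y \<in> F \<union> G"
      proof (cases "snd y \<inter> U = {}")
        case True
        then have "snd x \<inter> U = {} \<and> fst (fst (fst x)) = fst (fst (fst y)) \<and>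
            snd (fst (fst x)) 0 = snd (fst (fst y)) 0 \<and> snd (fst (fst x)) 1 = snd (fst (fst y)) 1"
          using x(2) u01 by (auto simp: Rel_def)
        then have "y \<in> F" using x(1) by (auto simp: F_def halted_def ram_output_def)
        then show ?thesis by simp
      qed (simp add: G_def)
    qed
  qed simp
  also have "\<dots> \<le> measure (measure_pmf (arun P T (init e, {}))) F + measure (measure_pmf (arun P T (init e, {}))) G"
    by (rule measure_Un_le) auto
  also have "measure (measure_pmf (arun P T (init e, {}))) F = HT P e T (\<lambda>s. ram_output (snd (fst s)) \<in> A)"
    by (simp add: HT_arun F_def)
  finally show ?thesis by (simp add: G_def)
qed

lemma flag_union:
  assumes "finite U"
  shows "measure (measure_pmf p) {a::astate. snd a \<inter> U \<noteq> {}} \<le> (\<Sum>c\<in>U. measure (measure_pmf p) {a. c \<in> snd a})"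
proof -
  have "{a::astate. snd a \<inter> U \<noteq> {}} = (\<Union>c\<in>U. {a. c \<in> snd a})" by auto
  then show ?thesis using measure_pmf.finite_measure_subadditive_finite[OF assms, of "\<lambda>c. {a. c \<in> snd a}" p]
    by simp
qed

lemma reads_total:
  assumes "finite C"
  shows "(\<Sum>c\<in>C. measure (measure_pmf (arun P T (init e, {}))) {a. c \<in> snd a}) \<le> real T"
proof -
  let ?p = "measure_pmf (arun P T (init e, {}))"
  have int: "integrable ?p (indicator {a::astate. c \<in> snd a} :: astate \<Rightarrow> real)" for c
    by (rule measure_pmf.integrable_const_bound[where B=1]) auto
  have "(\<Sum>c\<in>C. measure ?p {a. c \<in> snd a}) = (\<Sum>c\<in>C. integral\<^sup>L ?p (indicator {a::astate. c \<in> snd a} :: astate \<Rightarrow> real))"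
    by simp
  also have "\<dots> = integral\<^sup>L ?p (\<lambda>a. \<Sum>c\<in>C. indicator {a::astate. c \<in> snd a} a :: real)"
    by (subst Bochner_Integration.integral_sum) (auto intro: int)
  also have "\<dots> \<le> real T"
  proof (rule measure_pmf.integral_le_const)
    show "integrable ?p (\<lambda>a. \<Sum>c\<in>C. indicator {a::astate. c \<in> snd a} a :: real)"
      by (intro Bochner_Integration.integrable_sum int)
    show "AE a in ?p. (\<Sum>c\<in>C. indicator {a::astate. c \<in> snd a} a :: real) \<le> real T"
      unfolding AE_measure_pmf_iff
    proof
      fix a assume a: "a \<in> set_pmf (arun P T (init e, {}))"
      have inv: "finite (snd a) \<and> card (snd a) \<le> snd (fst a) \<and> snd (fst a) \<le> T"
        using arun_inv[OF a[unfolded init_def]] unfolding init_def by simp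
      have "(\<Sum>c\<in>C. indicator {a::astate. c \<in> snd a} a :: real) = real (card (C \<inter> snd a))"
        using assms by (simp add: indicator_def sum.If_cases Int_def)
      also have "\<dots> \<le> real (card (snd a))" using inv by (intro of_nat_mono card_mono) auto
      also have "\<dots> \<le> real T" using inv by simp
      finally show "(\<Sum>c\<in>C. indicator {a::astate. c \<in> snd a} a :: real) \<le> real T" .
    qed
  qed
  finally show ?thesis .
qed


lemma mean_x:
  assumes "V \<subseteq> {3..<n+3}"
  shows "mean (map (\<lambda>i. 3+i \<in> V) [0..<n]) = real (card V) / real n"
proof -
  have "(\<Sum>i<n. of_bool (map (\<lambda>i. 3+i \<in> V) [0..<n] ! i) :: real) = (\<Sum>i<n. of_bool (3+i \<in> V))"
    by (intro sum.cong) auto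
  also have "\<dots> = real (card ({..<n} \<inter> {i. 3+i \<in> V}))"
    by (simp add: of_bool_def sum.If_cases)
  also have "card ({..<n} \<inter> {i. 3+i \<in> V}) = card V"
  proof (rule bij_betw_same_card[of "\<lambda>i. 3+i"])
    show "bij_betw (\<lambda>i. 3+i) ({..<n} \<inter> {i. 3+i \<in> V}) V"
      unfolding bij_betw_def inj_on_def
    proof (intro conjI ballI impI equalityI subsetI)
      fix c assume c: "c \<in> V"
      have "c \<in> {3..<n+3}" using c assms by auto
      then have "c - 3 \<in> {..<n} \<inter> {i. 3+i \<in> V}" "c = 3 + (c-3)" using c by auto
      then show "c \<in> (\<lambda>i. 3+i) ` ({..<n} \<inter> {i. 3+i \<in> V})" by blast
    qed auto
  qed
  finally show ?thesis by (simp add: mean_def)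
qed

lemma compat_x:
  assumes "V \<subseteq> {3..<n+3}"
  shows "compatible (map (\<lambda>i. 3+i \<in> V) [0..<n]) (\<lambda>c. if c \<in> V then 1 else ((\<lambda>_. 0)(2 := n)) c)"
  using assms unfolding compatible_def by auto

lemma exists_T:
  assumes "terminates P e" "0 < \<delta>"
  shows "\<exists>T. (\<Sum>t\<le>T. time_prob P e t) \<ge> 1 - \<delta>"
proof -
  have s: "summable (time_prob P e)" unfolding time_prob_At[abs_def] by (rule At_summable)
  have "time_prob P e sums 1" using s assms(1) unfolding terminates_def
    by (metis summable_sums)
  then have "(\<lambda>n. \<Sum>i<n. time_prob P e i) \<longlonglongrightarrow> 1" by (simp add: sums_def)
  then have "eventually (\<lambda>n. (\<Sum>i<n. time_prob P e i) > 1 - \<delta>) sequentially"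
    using assms(2) by (intro order_tendstoD(1)) auto
  then obtain N where N: "(\<Sum>i<N. time_prob P e i) > 1 - \<delta>" by (auto simp: eventually_sequentially)
  have "(\<Sum>i<N. time_prob P e i) \<le> (\<Sum>i\<le>N. time_prob P e i)"
    by (intro sum_mono2) (auto simp: time_prob_def)
  then show ?thesis using N by (intro exI[of _ N]) linarith
qed


lemma A_disj:
  assumes "n > 0" "\<bar>y - real i / real n\<bar> \<le> 1/(3*real n)" "\<bar>y - real j / real n\<bar> \<le> 1/(3*real n)"
  shows "i = j"
proof (rule ccontr)
  assume ne: "i \<noteq> j"
  have n: "real n > 0" using assms(1) by simp
  have "\<bar>real i / real n - real j / real n\<bar> \<le> 2/(3*real n)"
    using assms(2,3) by (auto simp: abs_le_iff)
  also have "\<bar>real i / real n - real j / real n\<bar> = \<bar>real i - real j\<bar> / real n"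
    by (simp add: diff_divide_distrib[symmetric] abs_divide)
  finally have d: "\<bar>real i - real j\<bar> / real n \<le> 2/(3*real n)" .
  have "\<bar>real i - real j\<bar> = real n * (\<bar>real i - real j\<bar> / real n)" using n by simp
  also have "\<dots> \<le> real n * (2/(3*real n))" by (rule mult_left_mono[OF d]) simp
  also have "\<dots> = 2/3" using n by simp
  finally have "\<bar>real i - real j\<bar> \<le> 2/3" .
  moreover have "\<bar>real i - real j\<bar> \<ge> 1" using ne by (cases "i < j") auto
  ultimately show False by simp
qed

theorem mainTheorem11:
  fixes P :: prog and \<epsilon> \<beta> :: real
  assumes halts: "\<forall>x env. compatible x env \<longrightarrow> terminates P env"
    and dp: "eps_DP \<epsilon> P"
    and const_time: "\<forall>x x' env env'. compatible x env \<longrightarrow> compatible x' env' \<longrightarrow>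
                       (\<forall>t. time_prob P env t = time_prob P env' t)"
    and "0 < \<beta>" and "\<beta> < 1"
  shows "\<exists>x \<alpha>. \<alpha> > 0 \<and> (\<forall>env. compatible x env \<longrightarrow>
           out_prob P env {y. \<bar>y - mean x\<bar> > \<alpha>} > \<beta>)"
proof (rule ccontr)
  assume neg: "\<not> ?thesis"
  have H: "\<exists>env. compatible x env \<and> out_prob P env {y. \<bar>y - mean x\<bar> > \<alpha>} \<le> \<beta>" if "\<alpha> > 0" for x \<alpha>
  proof -
    have "\<forall>x \<alpha>. \<alpha> \<le> 0 \<or> (\<exists>env. compatible x env \<and> out_prob P env {y. \<bar>y - mean x\<bar> > \<alpha>} \<le> \<beta>)"
      using neg by (auto simp: not_less)
    then have "\<alpha> \<le> 0 \<or> (\<exists>env. compatible x env \<and> out_prob P env {y. \<bar>y - mean x\<bar> > \<alpha>} \<le> \<beta>)" by blast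
    then show ?thesis using that by auto
  qed
  define \<gamma> where "\<gamma> = exp (-\<epsilon>) * (1-\<beta>)"
  have \<gamma>pos: "\<gamma> > 0" using assms by (simp add: \<gamma>_def)
  define \<delta> where "\<delta> = \<gamma>/4"
  have comp0: "compatible [] (\<lambda>_. 0)" by (simp add: compatible_def)
  have \<delta>pos: "\<delta> > 0" using \<gamma>pos by (simp add: \<delta>_def)
  obtain T where T: "(\<Sum>t\<le>T. time_prob P (\<lambda>_. 0) t) \<ge> 1 - \<delta>"
    using exists_T[OF halts[rule_format, OF comp0] \<delta>pos] by (elim exE)
  have HTall: "HT P env T (\<lambda>s. True) \<ge> 1 - \<delta>" if "compatible x env" for x env
  proof -
    have "HT P env T (\<lambda>s. True) = (\<Sum>t\<le>T. time_prob P (\<lambda>_. 0) t)"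
      unfolding HT_time using const_time[rule_format, OF that comp0] by simp
    then show ?thesis using T by simp
  qed
  define k :: nat where "k = nat \<lceil>2/\<gamma>\<rceil> + 1"
  have kpos: "k \<ge> 1" by (simp add: k_def)
  have "real (nat \<lceil>2/\<gamma>\<rceil>) \<ge> 2/\<gamma>" using \<gamma>pos by linarith
  then have "real (k+1) > 2/\<gamma>" by (simp add: k_def)
  then have k\<gamma>: "real (k+1) * (\<gamma>/2) > 1" using \<gamma>pos by (simp add: field_simps)
  define \<eta> where "\<eta> = \<gamma>/4"
  have \<eta>pos: "\<eta> > 0" using \<gamma>pos by (simp add: \<eta>_def)
  define D where "D = card (Dirs P)"
  define n where "n = D + k + nat \<lceil>real T * real k / \<eta>\<rceil> + 1"
  have npos: "n > 0" by (simp add: n_def)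
  define \<alpha> where "\<alpha> = 1 / (3 * real n)"
  have \<alpha>pos: "\<alpha> > 0" using npos by (simp add: \<alpha>_def)
  define e1 :: "nat \<Rightarrow> nat" where "e1 = (\<lambda>_. 0)(2 := n)"
  define S where "S c = measure (measure_pmf (arun P T (init e1, {}))) {a. c \<in> snd a}" for c
  have S0: "S c \<ge> 0" for c by (simp add: S_def)
  define C where "C = {3..<n+3} - Dirs P"
  have finC: "finite C" by (simp add: C_def)
  have cardC: "card C \<ge> n - D"
    using diff_card_le_card_Diff[OF finite_Dirs, of "{3..<n+3}" P] by (simp add: C_def D_def)
  have sumC: "sum S C \<le> real T" unfolding S_def by (rule reads_total[OF finC])
  define G where "G = {c\<in>C. S c \<le> \<eta> / real k}"
  have GC: "G \<subseteq> C" by (auto simp: G_def)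
  have "real (card (C - G)) * (\<eta> / real k) \<le> sum S (C - G)"
  proof (rule sum_bounded_below)
    fix c assume "c \<in> C - G" then show "\<eta> / real k \<le> S c" by (auto simp: G_def)
  qed
  also have "\<dots> \<le> sum S C" by (rule sum_mono2[OF finC]) (auto simp: S0)
  also have "\<dots> \<le> real T" by (rule sumC)
  finally have "real (card (C - G)) * (\<eta> / real k) \<le> real T" .
  then have "real (card (C - G)) \<le> real T * real k / \<eta>"
    using \<eta>pos kpos by (simp add: field_simps)
  also have "\<dots> \<le> real (nat \<lceil>real T * real k / \<eta>\<rceil>)" by linarith
  finally have cardbad: "card (C - G) \<le> nat \<lceil>real T * real k / \<eta>\<rceil>" by linarith
  have "card (C - G) = card C - card G" using GC finC by (simp add: card_Diff_subset finite_subset)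
  moreover have "card G \<le> card C" using GC finC by (simp add: card_mono)
  ultimately have "card G \<ge> k" using cardC cardbad unfolding n_def by linarith
  then obtain U where U: "U \<subseteq> G" "card U = k" "finite U" by (rule obtain_subset_with_card_n)
  have UC: "U \<subseteq> C" using U GC by auto
  have Udirs: "U \<inter> Dirs P = {}" using UC by (auto simp: C_def)
  have Urange: "U \<subseteq> {3..<n+3}" using UC by (auto simp: C_def)
  have U01: "0 \<notin> U" "1 \<notin> U" using Urange by auto
  have flag: "measure (measure_pmf (arun P T (init e1, {}))) {a. snd a \<inter> U \<noteq> {}} \<le> \<eta>"
  proof -
    have "measure (measure_pmf (arun P T (init e1, {}))) {a. snd a \<inter> U \<noteq> {}} \<le> sum S U"
      unfolding S_def by (rule flag_union[OF U(3)])
    also have "\<dots> \<le> real (card U) * (\<eta> / real k)"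
      by (rule sum_bounded_above) (use U in \<open>auto simp: G_def\<close>)
    also have "\<dots> = \<eta>" using U(2) kpos by simp
    finally show ?thesis .
  qed
  obtain h where h: "bij_betw h {0..<k} U" using ex_bij_betw_nat_finite[OF U(3)] U(2) by auto
  define V where "V j = h ` {0..<j}" for j
  have V: "V j \<subseteq> U \<and> card (V j) = j" if "j \<le> k" for j
  proof -
    have inj: "inj_on h {0..<j}"
      using bij_betw_imp_inj_on[OF h] by (rule inj_on_subset) (use that in auto)
    have "V j \<subseteq> U" using bij_betw_imp_surj_on[OF h] that by (auto simp: V_def)
    then show ?thesis using card_image[OF inj] by (simp add: V_def)
  qed
  define A where "A j = {y::real. \<bar>y - real j / real n\<bar> \<le> \<alpha>}" for j
  have key: "HT P e1 T (\<lambda>s. ram_output (snd (fst s)) \<in> A j) \<ge> \<gamma>/2" if j: "j \<le> k" for j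
  proof -
    define xj where "xj = map (\<lambda>i. 3+i \<in> V j) [0..<n]"
    define ej where "ej = (\<lambda>c. if c \<in> V j then 1 else e1 c)"
    have Vsub: "V j \<subseteq> {3..<n+3}" using V[OF j] Urange by auto
    have cj: "compatible xj ej" unfolding xj_def ej_def e1_def by (rule compat_x[OF Vsub])
    have mj: "mean xj = real j / real n" unfolding xj_def using mean_x[OF Vsub] V[OF j] by simp
    obtain env' where env': "compatible xj env'" "out_prob P env' {y. \<bar>y - mean xj\<bar> > \<alpha>} \<le> \<beta>"
      using H[OF \<alpha>pos, of xj] by (elim exE conjE)
    have c1: "out_prob P env' (A j) + out_prob P env' (-(A j)) = 1"
      by (rule out_prob_compl[OF halts[rule_format, OF env'(1)]])
    have "-(A j) = {y. \<bar>y - mean xj\<bar> > \<alpha>}" by (auto simp: A_def mj)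
    then have s1: "out_prob P env' (A j) \<ge> 1 - \<beta>" using c1 env'(2) by simp
    have "neighbors xj xj" by (simp add: neighbors_def)
    then have "out_prob P env' (A j) \<le> exp \<epsilon> * out_prob P ej (A j)"
      using dp[unfolded eps_DP_def, rule_format, OF _ env'(1) cj] by simp
    then have "exp \<epsilon> * \<gamma> \<le> exp \<epsilon> * out_prob P ej (A j)"
    proof -
      have "exp \<epsilon> * \<gamma> = 1 - \<beta>" by (simp add: \<gamma>_def exp_minus)
      then show ?thesis using s1 \<open>out_prob P env' (A j) \<le> exp \<epsilon> * out_prob P ej (A j)\<close> by linarith
    qed
    then have s2: "\<gamma> \<le> out_prob P ej (A j)" by simp
    have s3: "out_prob P ej (A j) \<le> 1 - HT P ej T (\<lambda>s. True) + HT P ej T (\<lambda>s. ram_output (snd (fst s)) \<in> A j)"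
      by (rule out_prob_upper[OF halts[rule_format, OF cj]])
    have s4: "HT P ej T (\<lambda>s. True) \<ge> 1 - \<delta>" by (rule HTall[OF cj])
    have agree: "\<forall>c. c \<notin> U \<longrightarrow> e1 c = ej c" using V[OF j] by (auto simp: ej_def)
    have s5: "HT P ej T (\<lambda>s. ram_output (snd (fst s)) \<in> A j) \<le> HT P e1 T (\<lambda>s. ram_output (snd (fst s)) \<in> A j)
          + measure (measure_pmf (arun P T (init e1, {}))) {a. snd a \<inter> U \<noteq> {}}"
      by (rule HT_couple[OF agree Udirs U01])
    show ?thesis using s2 s3 s4 s5 flag by (simp add: \<delta>_def \<eta>_def)
  qed
  have "(\<Sum>j\<le>k. HT P e1 T (\<lambda>s. ram_output (snd (fst s)) \<in> A j))
      = measure (measure_pmf (run P T (init e1))) (\<Union>j\<in>{..k}. {s. halted P (fst s) \<and> ram_output (snd (fst s)) \<in> A j})"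
    unfolding HT_def
  proof (rule measure_pmf.finite_measure_finite_Union[symmetric])
    show "disjoint_family_on (\<lambda>j. {s. halted P (fst s) \<and> ram_output (snd (fst s)) \<in> A j}) {..k}"
      unfolding disjoint_family_on_def
    proof (intro ballI impI)
      fix i j :: nat assume "i \<in> {..k}" "j \<in> {..k}" "i \<noteq> j"
      then show "{s. halted P (fst s) \<and> ram_output (snd (fst s)) \<in> A i} \<inter> {s. halted P (fst s) \<and> ram_output (snd (fst s)) \<in> A j} = {}"
        using A_disj[OF npos] by (auto simp: A_def \<alpha>_def)
    qed
  qed auto
  also have "\<dots> \<le> 1" by simp
  finally have le1: "(\<Sum>j\<le>k. HT P e1 T (\<lambda>s. ram_output (snd (fst s)) \<in> A j)) \<le> 1" .
  have "(\<Sum>j\<le>k. HT P e1 T (\<lambda>s. ram_output (snd (fst s)) \<in> A j)) \<ge> (\<Sum>j\<le>k. \<gamma>/2)"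
    by (rule sum_mono) (use key in auto)
  then have "real (k+1) * (\<gamma>/2) \<le> 1" using le1 by simp
  then show False using k\<gamma> by simp
qed
end
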